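(* Let $n$ be a natural number. The inclusion $\partial\boldsymbol\Delta^n\cup\Delta^n\hookrightarrow\boldsymbol\Delta^n$ is an expansion.
   Context: The thick simplex $\boldsymbol\Delta^n$ is the simplicial set whose $m$-simplices are all functions $\{0,\dots,m\}\to\{0,\dots,n\}$ (the nerve of the groupoid on $\{0,..,n\}$ with one morphism between any two objects); $\Delta^n\subset\boldsymbol\Delta^n$ is the simplicial subset of monotone functions, and the thick boundary $\partial\boldsymbol\Delta^n\subset\boldsymbol\Delta^n$ is the simplicial subset of functions that are not surjective (equivalently $\partial\Delta^n\times_\Delta\boldsymbol\Delta$). $\Lambda^p_i=\bigcup_{j\ne i}\partial_j\Delta^p$. An inclusion $S\hookrightarrow T$ is an expansion if there is a filtration $S=F_{-1}T\subset F_0T\subset\cdots$ with $T=\bigcup_\ell F_\ell T$, a weakly monotone sequence $n_\ell\ge1$, indices $0\le i_\ell\le n_\ell$, and maps $x_\ell:\Delta^{n_\ell}\to F_\ell T$, $y_\ell:\Lambda^{n_\ell}_{i_\ell}\to F_{\ell-1}T$ making $F_\ell T$ the pushout of $F_{\ell-1}T\leftarrow\Lambda^{n_\ell}_{i_\ell}\hookrightarrow\Delta^{n_\ell}$. *)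

theory Defs
  imports Main
begin

text \<open>An m-simplex of the thick simplex on vertices 0..N is a function {0..m} -> {0..N},
  represented as the list of its values (a nonempty list of length m+1).
  A simplicial operator theta : [k] -> [m] (monotone) is represented as a nonempty sorted
  list of length k+1 with entries at most m; it acts on simplices by precomposition.\<close>

definition simp_op :: "nat list \<Rightarrow> nat \<Rightarrow> bool" where
  "simp_op \<theta> m \<longleftrightarrow> \<theta> \<noteq> [] \<and> sorted \<theta> \<and> (\<forall>j\<in>set \<theta>. j \<le> m)"

definition act :: "nat list \<Rightarrow> nat list \<Rightarrow> nat list" where
  "act \<theta> \<sigma> = map (\<lambda>j. \<sigma> ! j) \<theta>"

definition simp_subset :: "nat list set \<Rightarrow> bool" where
  "simp_subset X \<longleftrightarrow> (\<forall>\<sigma>\<in>X. \<forall>\<theta>. simp_op \<theta> (length \<sigma> - 1) \<longrightarrow> act \<theta> \<sigma> \<in> X)"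

definition simp_map :: "nat list set \<Rightarrow> nat list set \<Rightarrow> (nat list \<Rightarrow> nat list) \<Rightarrow> bool" where
  "simp_map A B g \<longleftrightarrow> (\<forall>\<sigma>\<in>A. g \<sigma> \<in> B \<and> length (g \<sigma>) = length \<sigma> \<and>
      (\<forall>\<theta>. simp_op \<theta> (length \<sigma> - 1) \<longrightarrow> g (act \<theta> \<sigma>) = act \<theta> (g \<sigma>)))"

definition thick :: "nat \<Rightarrow> nat list set" where
  "thick N = {\<sigma>. \<sigma> \<noteq> [] \<and> set \<sigma> \<subseteq> {0..N}}"

definition std :: "nat \<Rightarrow> nat list set" where
  "std N = {\<sigma> \<in> thick N. sorted \<sigma>}"

definition thick_bd :: "nat \<Rightarrow> nat list set" where
  "thick_bd N = {\<sigma> \<in> thick N. \<not> {0..N} \<subseteq> set \<sigma>}"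

text \<open>Lambda^p_i = union over j /= i of the j-th face of Delta^p, i.e. monotone simplices
  missing some vertex j /= i.\<close>
definition horn :: "nat \<Rightarrow> nat \<Rightarrow> nat list set" where
  "horn p i = {\<sigma> \<in> std p. \<exists>j\<le>p. j \<noteq> i \<and> j \<notin> set \<sigma>}"

text \<open>Q (a simplicial subset containing P) is the pushout of P <- Lambda^p_i -> Delta^p
  along x : Delta^p -> Q restricting to Lambda^p_i -> P, with P -> Q the inclusion.
  Since pushouts of simplicial sets are computed degreewise, this means: Q is the union
  of P and the image of x, and x maps the simplices of Delta^p not in the horn injectively
  to simplices outside P.\<close>
definition pushout_step :: "nat list set \<Rightarrow> nat list set \<Rightarrow> nat \<Rightarrow> nat \<Rightarrow> (nat list \<Rightarrow> nat list) \<Rightarrow> bool" where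
  "pushout_step P Q p i x \<longleftrightarrow>
     simp_map (std p) Q x \<and> x ` horn p i \<subseteq> P \<and> P \<subseteq> Q \<and>
     Q = P \<union> x ` std p \<and> inj_on x (std p - horn p i) \<and>
     x ` (std p - horn p i) \<inter> P = {}"

text \<open>F 0 plays the role of F_{-1} T = S and F (Suc l) that of F_l T.
  The filtration may be finite or infinite: K is the (downward closed) set of indices at
  which a horn is attached; past K the filtration is constant.\<close>
definition expansion :: "nat list set \<Rightarrow> nat list set \<Rightarrow> bool" where
  "expansion S T \<longleftrightarrow> simp_subset S \<and> simp_subset T \<and> S \<subseteq> T \<and>
    (\<exists>F K n i x.
       F 0 = S \<and>
       (\<forall>l\<in>K. \<forall>l'<l. l' \<in> K) \<and>
       (\<forall>l\<in>K. 1 \<le> n l \<and> i l \<le> n l \<and> pushout_step (F l) (F (Suc l)) (n l) (i l) (x l)) \<and>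
       (\<forall>l. l \<notin> K \<longrightarrow> F (Suc l) = F l) \<and>
       (\<forall>l l'. l \<le> l' \<longrightarrow> l' \<in> K \<longrightarrow> n l \<le> n l') \<and>
       T = (\<Union>l. F l))"

end

theory Submission
  imports Defs "HOL-Library.Product_Lexorder" "HOL-Library.List_Lexorder"
begin

lemma act_length[simp]: "length (act \<theta> \<sigma>) = length \<theta>" by (simp add: act_def)
lemma act_nth[simp]: "i < length \<theta> \<Longrightarrow> act \<theta> \<sigma> ! i = \<sigma> ! (\<theta> ! i)" by (simp add: act_def)

lemma std_simp_op: "std p = {\<tau>. simp_op \<tau> p}"
  by (auto simp: std_def thick_def simp_op_def)

lemma simp_op_lt: "simp_op \<theta> (length \<sigma> - 1) \<Longrightarrow> \<sigma> \<noteq> [] \<Longrightarrow> j \<in> set \<theta> \<Longrightarrow> j < length \<sigma>"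
  by (cases \<sigma>) (auto simp: simp_op_def)

lemma act_comp:
  assumes "simp_op \<theta> (length \<tau> - 1)" "\<tau> \<noteq> []"
  shows "act \<theta> (act \<tau> \<sigma>) = act (act \<theta> \<tau>) \<sigma>"
proof -
  have "\<forall>j\<in>set \<theta>. j < length \<tau>" using assms simp_op_lt by blast
  thus ?thesis by (auto simp: act_def)
qed

lemma simp_op_comp:
  assumes "simp_op \<tau> m" "simp_op \<theta> (length \<tau> - 1)"
  shows "simp_op (act \<theta> \<tau>) m"
proof -
  have ne: "\<tau> \<noteq> []" using assms(1) by (auto simp: simp_op_def)
  have lt: "\<forall>j\<in>set \<theta>. j < length \<tau>" using assms(2) simp_op_lt ne by blast
  have "sorted (act \<theta> \<tau>)"
    unfolding sorted_iff_nth_mono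
  proof (intro allI impI)
    fix i j assume ij: "i \<le> j" "j < length (act \<theta> \<tau>)"
    hence "\<theta>!i \<le> \<theta>!j" using assms(2) by (auto simp: simp_op_def sorted_iff_nth_mono)
    moreover have "\<theta>!j < length \<tau>" using lt ij by auto
    ultimately show "act \<theta> \<tau> ! i \<le> act \<theta> \<tau> ! j" using ij assms(1)
      by (auto simp: simp_op_def sorted_iff_nth_mono)
  qed
  moreover have "\<forall>j\<in>set (act \<theta> \<tau>). j \<le> m" using lt assms(1) by (auto simp: act_def simp_op_def)
  ultimately show ?thesis using assms(2) by (auto simp: simp_op_def act_def)
qed

lemma act_set: "simp_op \<theta> (length \<sigma> - 1) \<Longrightarrow> \<sigma> \<noteq> [] \<Longrightarrow> set (act \<theta> \<sigma>) \<subseteq> set \<sigma>"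
  using simp_op_lt by (fastforce simp: act_def)

lemma act_sorted:
  assumes "simp_op \<theta> (length \<sigma> - 1)" "\<sigma> \<noteq> []" "sorted \<sigma>"
  shows "sorted (act \<theta> \<sigma>)"
proof -
  have lt: "\<forall>j\<in>set \<theta>. j < length \<sigma>" using assms simp_op_lt by blast
  show ?thesis unfolding sorted_iff_nth_mono
  proof (intro allI impI)
    fix i j assume ij: "i \<le> j" "j < length (act \<theta> \<sigma>)"
    hence "\<theta>!i \<le> \<theta>!j" using assms(1) by (auto simp: simp_op_def sorted_iff_nth_mono)
    moreover have "\<theta>!j < length \<sigma>" using lt ij by auto
    ultimately show "act \<theta> \<sigma> ! i \<le> act \<theta> \<sigma> ! j" using ij assms(3)
      by (auto simp: sorted_iff_nth_mono)
  qed
qed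

lemma simp_subset_thick: "simp_subset (thick N)"
  unfolding simp_subset_def thick_def
  using act_set by (auto simp: simp_op_def act_def)

lemma simp_subset_S: "simp_subset (thick_bd N \<union> std N)"
  unfolding simp_subset_def
proof (intro ballI allI impI)
  fix \<sigma> \<theta> assume s: "\<sigma> \<in> thick_bd N \<union> std N" and th: "simp_op \<theta> (length \<sigma> - 1)"
  have ne: "\<sigma> \<noteq> []" using s by (auto simp: thick_bd_def std_def thick_def)
  have T: "act \<theta> \<sigma> \<in> thick N" using simp_subset_thick s th
    by (auto simp: simp_subset_def thick_bd_def std_def)
  show "act \<theta> \<sigma> \<in> thick_bd N \<union> std N"
    using s T act_set[OF th ne] act_sorted[OF th ne]
    by (auto simp: thick_bd_def std_def)
qed

lemma rd_cons_cong: "remdups_adj xs = remdups_adj ys \<Longrightarrow> remdups_adj (x#xs) = remdups_adj (x#ys)"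
  by (simp add: remdups_adj_Cons)

lemma rd_map: "remdups_adj (map f (remdups_adj xs)) = remdups_adj (map f xs)"
proof (induction xs rule: remdups_adj.induct)
  case (3 x y xs)
  show ?case
  proof (cases "x = y")
    case True thus ?thesis using 3 by simp
  next
    case False
    hence "remdups_adj (map f (remdups_adj (x # y # xs))) = remdups_adj (f x # map f (remdups_adj (y # xs)))" by simp
    also have "\<dots> = remdups_adj (f x # map f (y # xs))" by (rule rd_cons_cong) (use 3 False in simp)
    finally show ?thesis by simp
  qed
qed auto

lemma sorted_rd_iff: "sorted (remdups_adj xs) \<longleftrightarrow> sorted xs"
proof (induction xs)
  case (Cons x xs)
  have "sorted (remdups_adj (x#xs)) = sorted (x # remdups_adj xs)"
    by (cases "remdups_adj xs") (auto simp: remdups_adj_Cons)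
  thus ?case using Cons by simp
qed simp

lemma sorted_rd_distinct: assumes "sorted xs" shows "distinct (remdups_adj xs)"
proof -
  let ?ys = "remdups_adj xs"
  have s: "sorted ?ys" using assms by simp
  have d: "distinct_adj ?ys" by simp
  have "successively (<) ?ys" unfolding successively_conv_nth
  proof (intro allI impI)
    fix i assume i: "Suc i < length ?ys"
    have "?ys ! i \<le> ?ys ! Suc i" proof -
      have "i \<le> Suc i" by (rule le_SucI) (rule order_refl)
      from sorted_nth_mono[OF s this i] show ?thesis .
    qed
    moreover have "?ys ! i \<noteq> ?ys ! Suc i" using successively_nth[of "(\<noteq>)" ?ys i] d i unfolding distinct_adj_def by blast
    ultimately show "?ys ! i < ?ys ! Suc i" by simp
  qed
  hence "sorted_wrt (<) ?ys" by (subst (asm) successively_conv_sorted_wrt) (auto simp: transp_def)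
  thus ?thesis by (simp add: strict_sorted_iff)
qed

lemma rd_sorted_eq:
  "sorted xs \<Longrightarrow> sorted ys \<Longrightarrow> distinct ys \<Longrightarrow> set xs = set ys \<Longrightarrow> remdups_adj xs = ys"
proof -
  assume a: "sorted xs" "sorted ys" "distinct ys" "set xs = set ys"
  show ?thesis
  proof (rule sorted_distinct_set_unique)
    show "sorted (remdups_adj xs)" using a by simp
    show "distinct (remdups_adj xs)" using sorted_rd_distinct a by blast
    show "set (remdups_adj xs) = set ys" using a by simp
  qed (use a in auto)
qed

lemma degen_aux:
  "xs \<noteq> [] \<Longrightarrow> \<exists>\<tau>. \<tau> \<noteq> [] \<and> sorted \<tau> \<and> (\<forall>j\<in>set \<tau>. j < length (remdups_adj xs)) \<and> hd \<tau> = 0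
     \<and> map (\<lambda>j. remdups_adj xs ! j) \<tau> = xs"
proof (induction xs rule: remdups_adj.induct)
  case 1 then show ?case by simp
next
  case (2 x) show ?case by (rule exI[where x="[0]"]) simp
next
  case (3 x y xs)
  show ?case
  proof (cases "x = y")
    case True
    have ex: "\<exists>\<tau>. \<tau> \<noteq> [] \<and> sorted \<tau> \<and> (\<forall>j\<in>set \<tau>. j < length (remdups_adj (x#xs))) \<and>
      hd \<tau> = 0 \<and> map (\<lambda>j. remdups_adj (x#xs) ! j) \<tau> = x # xs" by (rule 3(1)[OF True]) simp
    then obtain \<tau> where t: "\<tau> \<noteq> []" "sorted \<tau>" "\<forall>j\<in>set \<tau>. j < length (remdups_adj (x#xs))"
      "hd \<tau> = 0" "map (\<lambda>j. remdups_adj (x#xs) ! j) \<tau> = x # xs" by (elim exE conjE)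
    have h: "remdups_adj (x#xs) ! 0 = x"
      using hd_remdups_adj[of "x#xs"] hd_conv_nth[of "remdups_adj (x#xs)"] by simp
    have e: "remdups_adj (x#y#xs) = remdups_adj (x#xs)" using True by simp
    have m: "map (\<lambda>j. remdups_adj (x#y#xs) ! j) (0 # \<tau>) = x # y # xs"
      using t(5) e h True by simp
    have so: "sorted (0 # \<tau>)" using t(2) by simp
    show ?thesis apply (rule exI[where x="0 # \<tau>"]) using so t(3) e m by simp
  next
    case False
    have ex: "\<exists>\<tau>. \<tau> \<noteq> [] \<and> sorted \<tau> \<and> (\<forall>j\<in>set \<tau>. j < length (remdups_adj (y#xs))) \<and>
      hd \<tau> = 0 \<and> map (\<lambda>j. remdups_adj (y#xs) ! j) \<tau> = y # xs" by (rule 3(2)[OF False]) simp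
    then obtain \<tau> where t: "\<tau> \<noteq> []" "sorted \<tau>" "\<forall>j\<in>set \<tau>. j < length (remdups_adj (y#xs))"
      "hd \<tau> = 0" "map (\<lambda>j. remdups_adj (y#xs) ! j) \<tau> = y # xs" by (elim exE conjE)
    have e: "remdups_adj (x#y#xs) = x # remdups_adj (y#xs)" using False by simp
    have "map (\<lambda>j. remdups_adj (x#y#xs) ! j) (0 # map Suc \<tau>) = x # y # xs"
      using t(5) e by (simp add: comp_def)
    moreover have "sorted (0 # map Suc \<tau>)" using t(2) by (simp add: sorted_map)
    ultimately show ?thesis apply (rule_tac exI[where x="0 # map Suc \<tau>"]) using t(3) e by simp
  qed
qed

lemma degen:
  assumes "xs \<noteq> []"
  shows "\<exists>\<tau>. simp_op \<tau> (length (remdups_adj xs) - 1) \<and> act \<tau> (remdups_adj xs) = xs"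
proof -
  obtain \<tau> where t: "\<tau> \<noteq> []" "sorted \<tau>" "\<forall>j\<in>set \<tau>. j < length (remdups_adj xs)"
     "map (\<lambda>j. remdups_adj xs ! j) \<tau> = xs" using degen_aux[OF assms] by (elim exE conjE)
  show ?thesis apply (rule exI[where x=\<tau>]) using t by (auto simp: simp_op_def act_def)
qed

definition good :: "nat list \<Rightarrow> nat \<Rightarrow> bool" where
  "good s j \<longleftrightarrow> j < length s \<and> s!j = j \<and> (\<forall>i. j < i \<and> i < length s \<longrightarrow> s!i \<noteq> j)"
definition idx :: "nat list \<Rightarrow> nat" where "idx s = (LEAST k. \<not> good s k)"
definition istop :: "nat list \<Rightarrow> bool" where "istop s \<longleftrightarrow> idx s < length s \<and> s ! idx s = idx s"
definition ins :: "nat \<Rightarrow> nat list \<Rightarrow> nat list" where "ins k b = take k b @ k # drop k b"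
definition own :: "nat list \<Rightarrow> nat list" where "own s = (if istop s then s else ins (idx s) s)"
definition dface :: "nat \<Rightarrow> nat list \<Rightarrow> nat list" where "dface j t = take j t @ drop (Suc j) t"
definition SS :: "nat \<Rightarrow> nat list set" where "SS N = thick_bd N \<union> std N"
definition XX :: "nat \<Rightarrow> nat list set" where "XX N = {b \<in> thick N. b \<notin> SS N \<and> distinct_adj b}"
definition Tops :: "nat \<Rightarrow> nat list set" where "Tops N = {t \<in> XX N. istop t}"

lemma idx_good: "j < idx s \<Longrightarrow> good s j"
  unfolding idx_def using not_less_Least by blast

lemma idx_not_good: "\<not> good s (idx s)"
proof -
  have "\<not> good s (length s)" by (simp add: good_def)
  thus ?thesis unfolding idx_def by (rule LeastI)
qed

lemma idx_ge: "(\<And>j. j < k \<Longrightarrow> good s j) \<Longrightarrow> k \<le> idx s"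
  using idx_not_good not_less by blast

lemma idx_eqI: "(\<And>j. j < k \<Longrightarrow> good s j) \<Longrightarrow> \<not> good s k \<Longrightarrow> idx s = k"
  using idx_ge idx_good le_neq_implies_less by blast

lemma length_dface[simp]: "j < length t \<Longrightarrow> length (dface j t) = length t - 1"
  by (simp add: dface_def)

lemma nth_dface: "j < length t \<Longrightarrow> i < length t - 1 \<Longrightarrow> dface j t ! i = (if i < j then t!i else t!Suc i)"
  by (auto simp: dface_def nth_append min_def)

lemma length_ins[simp]: "k \<le> length b \<Longrightarrow> length (ins k b) = Suc (length b)"
  by (simp add: ins_def)

lemma nth_ins: "k \<le> length b \<Longrightarrow> i < Suc (length b) \<Longrightarrow>
   ins k b ! i = (if i < k then b!i else if i = k then k else b!(i - 1))"
  by (cases "i < k"; cases "i = k") (auto simp: ins_def nth_append min_def nth_Cons')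

lemma dadj_nth: "distinct_adj xs \<longleftrightarrow> (\<forall>i. Suc i < length xs \<longrightarrow> xs!i \<noteq> xs!Suc i)"
  by (simp add: distinct_adj_def successively_conv_nth)

lemma thick_nth: "\<sigma> \<in> thick N \<longleftrightarrow> \<sigma> \<noteq> [] \<and> (\<forall>i<length \<sigma>. \<sigma>!i \<le> N)"
proof
  assume "\<sigma> \<in> thick N" thus "\<sigma> \<noteq> [] \<and> (\<forall>i<length \<sigma>. \<sigma>!i \<le> N)"
    unfolding thick_def using nth_mem by fastforce
next
  assume a: "\<sigma> \<noteq> [] \<and> (\<forall>i<length \<sigma>. \<sigma>!i \<le> N)"
  have "set \<sigma> \<subseteq> {0..N}"
  proof
    fix x assume "x \<in> set \<sigma>" then obtain i where "i < length \<sigma>" "\<sigma>!i = x" by (auto simp: in_set_conv_nth)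
    thus "x \<in> {0..N}" using a by auto
  qed
  thus "\<sigma> \<in> thick N" using a by (simp add: thick_def)
qed

lemma SS_iff: "\<sigma> \<in> SS N \<longleftrightarrow> \<sigma> \<in> thick N \<and> (\<not> {0..N} \<subseteq> set \<sigma> \<or> sorted \<sigma>)"
  by (auto simp: SS_def thick_bd_def std_def)

lemma XX_iff: "b \<in> XX N \<longleftrightarrow> b \<in> thick N \<and> {0..N} \<subseteq> set b \<and> \<not> sorted b \<and> distinct_adj b"
  by (auto simp: XX_def SS_iff)

lemma top_facts:
  assumes "t \<in> Tops N"
  defines "k \<equiv> idx t"
  shows "\<And>j. j < k \<Longrightarrow> t!j = j" "\<And>j i. j < k \<Longrightarrow> j < i \<Longrightarrow> i < length t \<Longrightarrow> t!i \<noteq> j"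
    "Suc k < length t" "t!k = k" "k < t!Suc k" "\<exists>q. Suc k < q \<and> q < length t \<and> t!q = k"
    "k < N" "t \<in> thick N" "distinct_adj t" "{0..N} \<subseteq> set t" "\<not> sorted t"
proof -
  have X: "t \<in> thick N" "{0..N} \<subseteq> set t" "\<not> sorted t" "distinct_adj t" and tp: "istop t"
    using assms(1) by (auto simp: Tops_def XX_iff)
  show g1: "\<And>j. j < k \<Longrightarrow> t!j = j" using idx_good unfolding k_def good_def by blast
  show g2: "\<And>j i. j < k \<Longrightarrow> j < i \<Longrightarrow> i < length t \<Longrightarrow> t!i \<noteq> j"
    using idx_good unfolding k_def good_def by blast
  have kl: "k < length t" and tk: "t!k = k" using tp by (auto simp: istop_def k_def)
  show "t!k = k" by (fact tk)
  from idx_not_good[of t] kl tk obtain q where q: "k < q" "q < length t" "t!q = k"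
    unfolding good_def k_def by auto
  show sk: "Suc k < length t" using q by simp
  have ne: "t!Suc k \<noteq> k" using X(4) sk tk by (auto simp: dadj_nth)
  have "t!Suc k \<noteq> j" if "j < k" for j using g2[OF that, of "Suc k"] that sk by simp
  hence ge: "k \<le> t!Suc k"
  proof -
    assume h: "\<And>j. j < k \<Longrightarrow> t!Suc k \<noteq> j"
    show ?thesis proof (rule ccontr)
      assume "\<not> k \<le> t!Suc k" hence "t!Suc k < k" by simp
      from h[OF this] show False by simp
    qed
  qed
  show "k < t!Suc k" using ne ge by simp
  show "\<exists>q. Suc k < q \<and> q < length t \<and> t!q = k" using q ne by (metis Suc_lessI)
  have "t!Suc k \<le> N" using X(1) sk by (auto simp: thick_nth)
  thus "k < N" using \<open>k < t!Suc k\<close> by simp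
qed (use assms in \<open>auto simp: Tops_def XX_iff\<close>)

lemma bot_facts:
  assumes "b \<in> XX N" "\<not> istop b"
  defines "k \<equiv> idx b"
  shows "\<And>j. j < k \<Longrightarrow> b!j = j" "\<And>j i. j < k \<Longrightarrow> j < i \<Longrightarrow> i < length b \<Longrightarrow> b!i \<noteq> j"
    "k < length b" "k < b!k" "k < N" "\<exists>q. k < q \<and> q < length b \<and> b!q = k"
proof -
  have X: "b \<in> thick N" "{0..N} \<subseteq> set b" "\<not> sorted b" "distinct_adj b"
    using assms(1) by (auto simp: XX_iff)
  show g1: "\<And>j. j < k \<Longrightarrow> b!j = j" using idx_good unfolding k_def good_def by blast
  show g2: "\<And>j i. j < k \<Longrightarrow> j < i \<Longrightarrow> i < length b \<Longrightarrow> b!i \<noteq> j"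
    using idx_good unfolding k_def good_def by blast
  show kl: "k < length b"
  proof (rule ccontr)
    assume "\<not> k < length b"
    hence "\<forall>i<length b. b!i = i" using g1 by auto
    hence "sorted b" unfolding sorted_iff_nth_mono by auto
    thus False using X(3) by simp
  qed
  have ne: "b!k \<noteq> k" using assms(2) kl by (simp add: istop_def k_def)
  have ge: "k \<le> b!k"
  proof (rule ccontr)
    assume "\<not> k \<le> b!k" hence "b!k < k" by simp
    from g2[OF this, of k] g1[OF this] show False using \<open>b!k < k\<close> kl by simp
  qed
  show gt: "k < b!k" using ne ge by simp
  have "b!k \<le> N" using X(1) kl by (simp add: thick_nth)
  thus kN: "k < N" using gt by simp
  have "k \<in> set b" using X(2) kN by auto
  then obtain q where q: "q < length b" "b!q = k" by (auto simp: in_set_conv_nth)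
  have "k < q"
  proof (rule ccontr)
    assume "\<not> k < q"
    hence "q < k \<or> q = k" by auto
    thus False using g1[of q] q ne by auto
  qed
  thus "\<exists>q. k < q \<and> q < length b \<and> b!q = k" using q by blast
qed

lemma ins_top:
  assumes "b \<in> XX N" "\<not> istop b"
  defines "k \<equiv> idx b"
  shows "ins k b \<in> Tops N" "idx (ins k b) = k" "dface k (ins k b) = b" "length (ins k b) = Suc (length b)"
proof -
  note bf = bot_facts[OF assms(1,2), folded k_def]
  have X: "b \<in> thick N" "{0..N} \<subseteq> set b" "\<not> sorted b" "distinct_adj b"
    using assms(1) by (auto simp: XX_iff)
  let ?c = "ins k b"
  have kl: "k \<le> length b" using bf(3) by simp
  have lc: "length ?c = Suc (length b)" using kl by simp
  show "length (ins k b) = Suc (length b)" by (fact lc)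
  have nc: "\<And>i. i < Suc (length b) \<Longrightarrow> ?c ! i = (if i < k then b!i else if i = k then k else b!(i - 1))"
    using nth_ins[OF kl] by blast
  have gd: "good ?c j" if j: "j < k" for j
  proof -
    have "?c ! i \<noteq> j" if "j < i" "i < length ?c" for i
    proof -
      consider "i < k" | "i = k" | "k < i" by linarith
      thus ?thesis
      proof cases
        case 1 thus ?thesis using nc[of i] that bf(2)[OF j, of i] lc bf(3) by auto
      next
        case 2 thus ?thesis using nc[of i] that j lc by auto
      next
        case 3 thus ?thesis using nc[of i] that bf(2)[OF j, of "i - 1"] lc j by auto
      qed
    qed
    moreover have "?c ! j = j" using nc[of j] j bf(1)[OF j] bf(3) by auto
    ultimately show ?thesis unfolding good_def using j bf(3) lc by auto
  qed
  obtain q where q: "k < q" "q < length b" "b!q = k" using bf(6) by blast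
  have ng: "\<not> good ?c k"
  proof -
    have cq: "?c ! Suc q = k" using nc[of "Suc q"] q by auto
    show ?thesis
    proof
      assume "good ?c k"
      hence "\<forall>i. k < i \<and> i < length ?c \<longrightarrow> ?c!i \<noteq> k" unfolding good_def by blast
      hence "?c ! Suc q \<noteq> k" using q lc by simp
      thus False using cq by simp
    qed
  qed
  show ik: "idx ?c = k" using idx_eqI[of k ?c] gd ng by blast
  have ck: "?c ! k = k" using nc[of k] bf(3) by auto
  have tp: "istop ?c" unfolding istop_def ik using ck lc bf(3) by auto
  have th: "?c \<in> thick N"
    unfolding thick_nth
  proof (intro conjI allI impI)
    show "?c \<noteq> []" using lc by auto
    fix i assume "i < length ?c"
    thus "?c ! i \<le> N" using nc[of i] X(1) bf(5) bf(3) lc unfolding thick_nth by auto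
  qed
  have sc: "set b \<subseteq> set ?c"
  proof
    fix x assume "x \<in> set b"
    then obtain i where i: "i < length b" "b!i = x" by (auto simp: in_set_conv_nth)
    show "x \<in> set ?c"
    proof (cases "i < k")
      case True thus ?thesis using nc[of i] i lc by (metis less_SucI nth_mem)
    next
      case False
      hence "?c ! Suc i = x" using nc[of "Suc i"] i by auto
      thus ?thesis using i lc by (metis Suc_less_eq nth_mem)
    qed
  qed
  have ns: "\<not> sorted ?c"
  proof
    assume sc: "sorted ?c"
    let ?f = "\<lambda>i. if i < k then i else Suc i"
    have "b ! i \<le> b ! j" if "i \<le> j" "j < length b" for i j
    proof -
      have "b!i = ?c ! ?f i" using nc[of "?f i"] that by auto
      moreover have "b!j = ?c ! ?f j" using nc[of "?f j"] that by auto
      moreover have "?f i \<le> ?f j" "?f j < length ?c" using that lc by auto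
      ultimately show ?thesis using sc by (simp add: sorted_iff_nth_mono)
    qed
    hence "sorted b" by (simp add: sorted_iff_nth_mono)
    thus False using X(3) by simp
  qed
  have da: "distinct_adj ?c"
    unfolding dadj_nth
  proof (intro allI impI)
    fix i assume i: "Suc i < length ?c"
    have bd: "\<And>i. Suc i < length b \<Longrightarrow> b!i \<noteq> b!Suc i" using X(4) by (simp add: dadj_nth)
    consider "Suc i < k" | "Suc i = k" | "i = k" | "k < i" by linarith
    thus "?c ! i \<noteq> ?c ! Suc i"
    proof cases
      case 1 thus ?thesis using nc[of i] nc[of "Suc i"] i lc bd[of i] bf(3) by auto
    next
      case 2 thus ?thesis using nc[of i] nc[of "Suc i"] i lc bf(1)[of i] by auto
    next
      case 3 thus ?thesis using nc[of i] nc[of "Suc i"] i lc bf(4) by auto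
    next
      case 4 thus ?thesis using nc[of i] nc[of "Suc i"] i lc bd[of "i - 1"] by auto
    qed
  qed
  show "?c \<in> Tops N" unfolding Tops_def XX_iff using th sc X(2) ns da tp by auto
  show "dface k ?c = b"
  proof (rule nth_equalityI)
    show "length (dface k ?c) = length b" using lc bf(3) by simp
    fix i assume "i < length (dface k ?c)"
    hence i: "i < length b" using lc bf(3) by simp
    show "dface k ?c ! i = b ! i"
      using nth_dface[of k ?c i] nc[of i] nc[of "Suc i"] i lc bf(3) by auto
  qed
qed

lemma top_dface:
  assumes "t \<in> Tops N"
  defines "k \<equiv> idx t"
  shows "dface k t \<in> XX N" "\<not> istop (dface k t)" "idx (dface k t) = k" "ins k (dface k t) = t"
    "length (dface k t) = length t - 1"
proof -
  note tf = top_facts[OF assms(1), folded k_def]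
  let ?d = "dface k t"
  have kl: "k < length t" using tf(3) by simp
  show ld: "length ?d = length t - 1" using kl by simp
  have nd: "\<And>i. i < length t - 1 \<Longrightarrow> ?d ! i = (if i < k then t!i else t!Suc i)"
    using nth_dface[OF kl] by blast
  have gd: "good ?d j" if j: "j < k" for j
  proof -
    have "?d ! i \<noteq> j" if "j < i" "i < length ?d" for i
      using nd[of i] that tf(2)[OF j, of i] tf(2)[OF j, of "Suc i"] ld by auto
    moreover have "?d ! j = j" using nd[of j] j tf(1)[OF j] tf(3) by auto
    ultimately show ?thesis unfolding good_def using j tf(3) ld by auto
  qed
  have dk: "?d ! k = t ! Suc k" using nd[of k] tf(3) by auto
  have ng: "\<not> good ?d k" unfolding good_def using dk tf(5) by auto
  show ik: "idx ?d = k" using idx_eqI[of k ?d] gd ng by blast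
  show "\<not> istop ?d" unfolding istop_def ik using dk tf(5) by auto
  obtain q where q: "Suc k < q" "q < length t" "t!q = k" using tf(6) by blast
  have dq: "?d ! (q - 1) = k" using nd[of "q - 1"] q by auto
  have th: "?d \<in> thick N"
    unfolding thick_nth
  proof (intro conjI allI impI)
    have "length ?d > 0" using ld tf(3) by simp
    thus "?d \<noteq> []" by auto
    fix i assume "i < length ?d"
    thus "?d ! i \<le> N" using nd[of i] tf(8) ld unfolding thick_nth by auto
  qed
  have sd: "{0..N} \<subseteq> set ?d"
  proof
    fix x assume "x \<in> {0..N}"
    hence "x \<in> set t" using tf(10) by auto
    then obtain i where i: "i < length t" "t!i = x" by (auto simp: in_set_conv_nth)
    consider "i < k" | "i = k" | "k < i" by linarith
    thus "x \<in> set ?d"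
    proof cases
      case 1
      have l: "i < length ?d" using 1 tf(3) ld by simp
      have "?d ! i = x" using nd[of i] 1 l ld i by simp
      thus ?thesis using nth_mem[OF l] by simp
    next
      case 2
      have l: "q - 1 < length ?d" using q ld by simp
      have "?d ! (q - 1) = x" using dq 2 i tf(4) by simp
      thus ?thesis using nth_mem[OF l] by simp
    next
      case 3
      have l: "i - 1 < length ?d" using 3 i ld by simp
      have a: "\<not> (i - 1 < k)" "Suc (i - 1) = i" using 3 by auto
      have "?d ! (i - 1) = x" using nd[of "i - 1"] a l ld i by simp
      thus ?thesis using nth_mem[OF l] by simp
    qed
  qed
  have ns: "\<not> sorted ?d"
  proof
    assume "sorted ?d"
    hence "?d ! k \<le> ?d ! (q - 1)" using q ld by (simp add: sorted_iff_nth_mono)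
    thus False using dk dq tf(5) by simp
  qed
  have da: "distinct_adj ?d"
    unfolding dadj_nth
  proof (intro allI impI)
    fix i assume i: "Suc i < length ?d"
    have bd: "\<And>i. Suc i < length t \<Longrightarrow> t!i \<noteq> t!Suc i" using tf(9) by (simp add: dadj_nth)
    consider "Suc i < k" | "Suc i = k" | "k \<le> i" by linarith
    thus "?d ! i \<noteq> ?d ! Suc i"
    proof cases
      case 1 thus ?thesis using nd[of i] nd[of "Suc i"] i ld bd[of i] tf(3) by auto
    next
      case 2 thus ?thesis using nd[of i] nd[of "Suc i"] i ld tf(1)[of i] tf(5) by auto
    next
      case 3 thus ?thesis using nd[of i] nd[of "Suc i"] i ld bd[of "Suc i"] by auto
    qed
  qed
  show "?d \<in> XX N" unfolding XX_iff using th sd ns da by auto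
  show "ins k ?d = t"
  proof (rule nth_equalityI)
    have kd: "k \<le> length ?d" using ld tf(3) by simp
    show "length (ins k ?d) = length t" using kd ld tf(3) by simp
    fix i assume "i < length (ins k ?d)"
    hence i: "i < length t" using kd ld tf(3) by simp
    show "ins k ?d ! i = t ! i"
      using nth_ins[OF kd, of i] nd[of i] nd[of "i - 1"] i ld tf(3) tf(4) by auto
  qed
qed

definition key :: "nat \<Rightarrow> nat list \<Rightarrow> nat \<times> nat \<times> nat list" where
  "key N t = (length t, N - idx t, t)"

lemma own_top: "t \<in> Tops N \<Longrightarrow> own t = t"
  by (simp add: own_def Tops_def)

lemma own_XX: assumes "b \<in> XX N" shows "own b \<in> Tops N" "length (own b) \<le> Suc (length b)"
proof -
  show "own b \<in> Tops N"
    using ins_top(1)[OF assms] assms by (auto simp: own_def Tops_def)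
  show "length (own b) \<le> Suc (length b)"
    using ins_top(4)[OF assms] by (auto simp: own_def)
qed

lemma own_dface: "t \<in> Tops N \<Longrightarrow> own (dface (idx t) t) = t"
  using top_dface(2,3,4) by (simp add: own_def)

lemma own_eq:
  assumes "b \<in> XX N" "t \<in> Tops N" "own b = t"
  shows "b = t \<or> b = dface (idx t) t"
proof (cases "istop b")
  case True thus ?thesis using assms by (simp add: own_def)
next
  case False
  have e: "ins (idx b) b = t" using assms(3) False by (simp add: own_def)
  have "idx t = idx b" using ins_top(2)[OF assms(1) False] e by simp
  thus ?thesis using ins_top(3)[OF assms(1) False] e by simp
qed

lemma face_key:
  assumes t: "t \<in> Tops N" and j: "j < length t" "j \<noteq> idx t" and b: "dface j t \<in> XX N"
  shows "key N (own (dface j t)) < key N t"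
proof -
  note tf = top_facts[OF t]
  let ?k = "idx t" and ?b = "dface j t"
  have lb: "length ?b = length t - 1" using j by simp
  have nb: "\<And>i. i < length t - 1 \<Longrightarrow> ?b ! i = (if i < j then t!i else t!Suc i)"
    using nth_dface[OF j(1)] by blast
  have XB: "{0..N} \<subseteq> set ?b" using b by (simp add: XX_iff)
  consider "j < ?k" | "?k < j" using j by linarith
  thus ?thesis
  proof cases
    case 1
    have "j \<notin> set ?b"
    proof
      assume "j \<in> set ?b"
      then obtain i where i: "i < length ?b" "?b ! i = j" by (auto simp: in_set_conv_nth)
      show False
      proof (cases "i < j")
        case True thus False using nb[of i] i lb tf(1)[of i] 1 by auto
      next
        case False
        have l: "Suc i < length t" "j < Suc i" using i lb False by auto
        have "?b ! i = t ! Suc i" using nb[of i] False i lb by simp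
        thus False using tf(2)[OF 1 l(2) l(1)] i by simp
      qed
    qed
    moreover have "j \<in> {0..N}" using 1 tf(7) by simp
    ultimately show ?thesis using XB by auto
  next
    case 2
    show ?thesis
    proof (cases "istop ?b")
      case True
      hence "own ?b = ?b" by (simp add: own_def)
      moreover have "length t - Suc 0 < length t" using tf(3) by simp
      ultimately show ?thesis using lb by (simp add: key_def)
    next
      case False
      have gd: "good ?b j'" if j': "j' < ?k" for j'
      proof -
        have "?b ! i \<noteq> j'" if "j' < i" "i < length ?b" for i
          using nb[of i] that lb tf(2)[OF j', of i] tf(2)[OF j', of "Suc i"] by auto
        moreover have "?b ! j' = j'" using nb[of j'] j' tf(1)[OF j'] 2 tf(3) by auto
        ultimately show ?thesis unfolding good_def using j' 2 j lb by auto
      qed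
      have ge: "?k \<le> idx ?b" using idx_ge[of ?k ?b] gd by blast
      have ne: "idx ?b \<noteq> ?k"
      proof
        assume e: "idx ?b = ?k"
        have "?b ! ?k = ?k" using nb[of ?k] 2 j tf(4) by auto
        moreover have "?k < length ?b" using 2 j lb by auto
        ultimately have "istop ?b" using e by (simp add: istop_def)
        thus False using False by simp
      qed
      have lt: "idx ?b < N" using bot_facts(5)[OF b False] .
      have o: "own ?b = ins (idx ?b) ?b" using False by (simp add: own_def)
      have "length (own ?b) = length t" using o ins_top(4)[OF b False] lb tf(3) by simp
      moreover have "idx (own ?b) = idx ?b" using o ins_top(2)[OF b False] by simp
      moreover have "N - idx ?b < N - ?k" using ge ne lt by arith
      ultimately show ?thesis by (simp add: key_def)
    qed
  qed
qed

lemma take_map_nth: "j \<le> length t \<Longrightarrow> map ((!) t) [0..<j] = take j t"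
  by (rule nth_equalityI) auto

lemma drop_map_nth: "map ((!) t) [j..<length t] = drop j t"
  by (rule nth_equalityI) (auto simp: add.commute)

lemma dface_filter:
  assumes "j < length t"
  shows "map ((!) t) (filter (\<lambda>i. i \<noteq> j) [0..<length t]) = dface j t"
proof -
  have "[0..<length t] = [0..<j] @ [j..<length t]"
    using upt_add_eq_append[of 0 j "length t - j"] assms by simp
  also have "[j..<length t] = j # [Suc j..<length t]" using assms by (simp add: upt_conv_Cons)
  finally have e: "[0..<length t] = [0..<j] @ j # [Suc j..<length t]" .
  have f1: "filter (\<lambda>i. i \<noteq> j) [0..<j] = [0..<j]" by (rule filter_True) simp
  have f2: "filter (\<lambda>i. i \<noteq> j) [Suc j..<length t] = [Suc j..<length t]" by (rule filter_True) simp
  have "filter (\<lambda>i. i \<noteq> j) [0..<length t] = [0..<j] @ [Suc j..<length t]"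
    unfolding e using f1 f2 by simp
  thus ?thesis using take_map_nth[of j t] drop_map_nth[of t "Suc j"] assms
    by (simp add: dface_def)
qed

lemma cover_rd:
  assumes t: "t \<in> Tops N" and op: "simp_op \<tau> (length t - 1)"
    and cov: "\<forall>j\<le>length t - 1. j \<noteq> idx t \<longrightarrow> j \<in> set \<tau>"
  shows "remdups_adj (act \<tau> t) = t \<or> remdups_adj (act \<tau> t) = dface (idx t) t"
proof -
  note tf = top_facts[OF t]
  let ?m = "length t" and ?k = "idx t"
  have st: "sorted \<tau>" using op by (simp add: simp_op_def)
  have tne: "t \<noteq> []" using tf(3) by auto
  have sub: "set \<tau> \<subseteq> {0..<?m}" using simp_op_lt[OF op tne] by auto
  have sup: "{0..<?m} - {?k} \<subseteq> set \<tau>"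
  proof
    fix x assume "x \<in> {0..<?m} - {?k}"
    hence "x \<le> ?m - 1" "x \<noteq> ?k" by auto
    thus "x \<in> set \<tau>" using cov by blast
  qed
  have r: "remdups_adj (act \<tau> t) = remdups_adj (map ((!) t) (remdups_adj \<tau>))"
    by (simp add: act_def rd_map)
  show ?thesis
  proof (cases "?k \<in> set \<tau>")
    case True
    hence "set \<tau> = {0..<?m}" using sub sup by auto
    hence "remdups_adj \<tau> = [0..<?m]" using rd_sorted_eq[OF st sorted_upt distinct_upt] by simp
    hence "remdups_adj (act \<tau> t) = remdups_adj t" using r by (simp add: map_nth)
    thus ?thesis using tf(9) by (simp add: distinct_adj_altdef)
  next
    case False
    hence "set \<tau> = {0..<?m} - {?k}" using sub sup by auto
    moreover have "sorted (filter (\<lambda>i. i \<noteq> ?k) [0..<?m])"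
      using sorted_wrt_filter[OF sorted_upt] by blast
    moreover have "distinct (filter (\<lambda>i. i \<noteq> ?k) [0..<?m])" by simp
    moreover have "set (filter (\<lambda>i. i \<noteq> ?k) [0..<?m]) = {0..<?m} - {?k}" by auto
    ultimately have "remdups_adj \<tau> = filter (\<lambda>i. i \<noteq> ?k) [0..<?m]"
      using rd_sorted_eq[OF st] by metis
    hence "remdups_adj (act \<tau> t) = remdups_adj (dface ?k t)" using r dface_filter[of ?k t] tf(3) by simp
    moreover have "distinct_adj (dface ?k t)" using top_dface(1)[OF t] by (simp add: XX_iff)
    ultimately show ?thesis by (simp add: distinct_adj_altdef)
  qed
qed

lemma rd_filter:
  assumes "sorted \<tau>" "set \<tau> = {0..<m} - {j}"
  shows "remdups_adj \<tau> = filter (\<lambda>i. i \<noteq> j) [0..<m]"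
proof -
  have "sorted (filter (\<lambda>i. i \<noteq> j) [0..<m])" using sorted_wrt_filter[OF sorted_upt] by blast
  moreover have "distinct (filter (\<lambda>i. i \<noteq> j) [0..<m])" by simp
  moreover have "set (filter (\<lambda>i. i \<noteq> j) [0..<m]) = {0..<m} - {j}" by auto
  ultimately show ?thesis using rd_sorted_eq[OF assms(1)] assms(2) by metis
qed

lemma rd_SS: "\<sigma> \<in> thick N \<Longrightarrow> remdups_adj \<sigma> \<in> SS N \<longleftrightarrow> \<sigma> \<in> SS N"
  by (auto simp: SS_iff thick_def sorted_rd_iff)

lemma rd_XX: "\<sigma> \<in> thick N \<Longrightarrow> \<sigma> \<notin> SS N \<Longrightarrow> remdups_adj \<sigma> \<in> XX N"
  using rd_SS[of \<sigma> N] by (auto simp: XX_def thick_def)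

lemma act_thick: "t \<in> thick N \<Longrightarrow> simp_op \<tau> (length t - 1) \<Longrightarrow> act \<tau> t \<in> thick N"
  using simp_subset_thick[of N] unfolding simp_subset_def by blast

lemma horn_key:
  assumes t: "t \<in> Tops N" and op: "simp_op \<tau> (length t - 1)"
    and j: "j \<le> length t - 1" "j \<noteq> idx t" "j \<notin> set \<tau>" and ns: "act \<tau> t \<notin> SS N"
  shows "remdups_adj (act \<tau> t) \<in> XX N" "key N (own (remdups_adj (act \<tau> t))) < key N t"
proof -
  note tf = top_facts[OF t]
  let ?m = "length t" and ?b = "remdups_adj (act \<tau> t)"
  have tne: "t \<noteq> []" using tf(3) by auto
  have st: "sorted \<tau>" using op by (simp add: simp_op_def)
  have th: "act \<tau> t \<in> thick N" using act_thick[OF tf(8) op] .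
  show bX: "?b \<in> XX N" using rd_XX[OF th ns] .
  have lb: "length ?b \<le> length (remdups_adj \<tau>)"
  proof -
    have "?b = remdups_adj (map ((!) t) (remdups_adj \<tau>))" by (simp add: act_def rd_map)
    also have "length \<dots> \<le> length (map ((!) t) (remdups_adj \<tau>))" by (rule remdups_adj_length)
    finally show ?thesis by simp
  qed
  have lr: "length (remdups_adj \<tau>) = card (set \<tau>)"
    using distinct_card[OF sorted_rd_distinct[OF st]] by simp
  have sub: "set \<tau> \<subseteq> {0..<?m} - {j}" using simp_op_lt[OF op tne] j(3) by auto
  have m0: "0 < ?m" using tne by simp
  have jl: "j < ?m" using j(1) m0 by linarith
  hence jm: "j \<in> {0..<?m}" by simp
  have cB: "card ({0..<?m} - {j}) = ?m - 1" using jm by simp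
  have cle: "card (set \<tau>) \<le> ?m - 1" using card_mono[OF _ sub] cB by simp
  show "key N (own ?b) < key N t"
  proof (cases "length ?b < ?m - 1")
    case True
    have "length (own ?b) < ?m" using own_XX(2)[OF bX] True by simp
    thus ?thesis by (simp add: key_def)
  next
    case False
    hence eqc: "card (set \<tau>) = card ({0..<?m} - {j})" using lb lr cle cB by simp
    have "set \<tau> = {0..<?m} - {j}" using card_subset_eq[OF _ sub eqc] by simp
    hence "remdups_adj \<tau> = filter (\<lambda>i. i \<noteq> j) [0..<?m]" using rd_filter[OF st] by blast
    hence e: "?b = remdups_adj (dface j t)"
      using dface_filter[of j t] jm by (simp add: act_def rd_map[symmetric])
    have "length (remdups_adj (dface j t)) = length (dface j t)"
      using e False lb lr cle jm by simp
    hence "distinct_adj (dface j t)" by (simp add: distinct_adj_conv_length_remdups_adj)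
    hence bd: "?b = dface j t" using e by (simp add: distinct_adj_altdef)
    show ?thesis using face_key[OF t _ j(2)] jm bX bd by simp
  qed
qed

lemma step0:
  fixes \<tau> :: "nat list"
  assumes "sorted \<tau>" "\<forall>x\<in>set \<tau>. x \<le> p" "\<forall>j\<le>p. j \<noteq> k \<longrightarrow> j \<in> set \<tau>" "\<tau> \<noteq> []"
  shows "\<tau>!0 = 0 \<or> (\<tau>!0 = 1 \<and> k = 0)"
proof -
  have gap: "c = k" if "c < \<tau>!0" for c
  proof (rule ccontr)
    assume "c \<noteq> k"
    moreover have "c \<le> p" using that assms(2,4) by (metis hd_conv_nth hd_in_set less_imp_le order_trans)
    ultimately have "c \<in> set \<tau>" using assms(3) by blast
    then obtain r where "r < length \<tau>" "\<tau>!r = c" by (auto simp: in_set_conv_nth)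
    moreover have "\<tau>!0 \<le> \<tau>!r" using assms(1) \<open>r < length \<tau>\<close> by (simp add: sorted_iff_nth_mono)
    ultimately show False using that by simp
  qed
  show ?thesis
  proof (cases "\<tau>!0 = 0")
    case False
    hence "0 < \<tau>!0" by simp
    hence k0: "k = 0" using gap[of 0] by simp
    have "\<not> 1 < \<tau>!0" using gap[of 1] k0 by auto
    thus ?thesis using False k0 by simp
  qed simp
qed

lemma step1:
  fixes \<tau> :: "nat list"
  assumes "sorted \<tau>" "\<forall>x\<in>set \<tau>. x \<le> p" "\<forall>j\<le>p. j \<noteq> k \<longrightarrow> j \<in> set \<tau>" "Suc i < length \<tau>"
  shows "\<tau>!Suc i = \<tau>!i \<or> \<tau>!Suc i = Suc (\<tau>!i) \<or> (\<tau>!Suc i = Suc (Suc (\<tau>!i)) \<and> k = Suc (\<tau>!i))"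
proof -
  have gap: "c = k" if "\<tau>!i < c" "c < \<tau>!Suc i" for c
  proof (rule ccontr)
    assume "c \<noteq> k"
    moreover have "c \<le> p" using that assms(2,4) nth_mem[OF assms(4)] by fastforce
    ultimately have "c \<in> set \<tau>" using assms(3) by blast
    then obtain r where r: "r < length \<tau>" "\<tau>!r = c" by (auto simp: in_set_conv_nth)
    show False
    proof (cases "r \<le> i")
      case True
      hence "\<tau>!r \<le> \<tau>!i" using sorted_nth_mono[OF assms(1), of r i] assms(4) by simp
      thus False using r that by simp
    next
      case False
      hence "Suc i \<le> r" by simp
      hence "\<tau>!Suc i \<le> \<tau>!r" using sorted_nth_mono[OF assms(1) _ r(1)] by blast
      thus False using r that by simp
    qed
  qed
  have le: "\<tau>!i \<le> \<tau>!Suc i" using assms(1,4) by (simp add: sorted_iff_nth_mono)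
  show ?thesis
  proof (cases "Suc (\<tau>!i) < \<tau>!Suc i")
    case True
    hence k: "k = Suc (\<tau>!i)" using gap[of "Suc (\<tau>!i)"] by simp
    have "\<not> Suc (Suc (\<tau>!i)) < \<tau>!Suc i" using gap[of "Suc (Suc (\<tau>!i))"] k by auto
    thus ?thesis using True k by simp
  next
    case False thus ?thesis using le by auto
  qed
qed

lemma inj_act:
  assumes t: "t \<in> Tops N"
    and o1: "simp_op \<tau> (length t - 1)" "\<forall>j\<le>length t - 1. j \<noteq> idx t \<longrightarrow> j \<in> set \<tau>"
    and o2: "simp_op \<tau>' (length t - 1)" "\<forall>j\<le>length t - 1. j \<noteq> idx t \<longrightarrow> j \<in> set \<tau>'"
    and eq: "act \<tau> t = act \<tau>' t"
  shows "\<tau> = \<tau>'"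
proof -
  note tf = top_facts[OF t]
  let ?k = "idx t" and ?p = "length t - 1"
  have tne: "t \<noteq> []" using tf(3) by auto
  have s1: "sorted \<tau>" "\<forall>x\<in>set \<tau>. x \<le> ?p" "\<tau> \<noteq> []" using o1 by (auto simp: simp_op_def)
  have s2: "sorted \<tau>'" "\<forall>x\<in>set \<tau>'. x \<le> ?p" "\<tau>' \<noteq> []" using o2 by (auto simp: simp_op_def)
  have len: "length \<tau> = length \<tau>'" using arg_cong[OF eq, of length] by simp
  have ev: "t!(\<tau>!i) = t!(\<tau>'!i)" if "i < length \<tau>" for i
    using arg_cong[OF eq, of "\<lambda>l. l!i"] that len by simp
  have b1: "\<tau>!i < length t" if "i < length \<tau>" for i using simp_op_lt[OF o1(1) tne] nth_mem[OF that] by blast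
  have b2: "\<tau>'!i < length t" if "i < length \<tau>" for i using simp_op_lt[OF o2(1) tne] nth_mem[of i \<tau>'] that len by auto
  have adj: "t!a \<noteq> t!Suc a" if "Suc a < length t" for a using tf(9) that by (simp add: dadj_nth)
  have skip: "t!(?k - 1) \<noteq> t!Suc ?k" if "0 < ?k"
    using tf(1)[of "?k - 1"] tf(5) that by simp
  have all: "\<forall>i. i < length \<tau> \<longrightarrow> \<tau>!i = \<tau>'!i"
  proof (intro allI)
    fix i show "i < length \<tau> \<longrightarrow> \<tau>!i = \<tau>'!i"
    proof (induction i)
      case 0
      show ?case
      proof
        assume l: "0 < length \<tau>"
        have A: "\<tau>!0 = 0 \<or> (\<tau>!0 = 1 \<and> ?k = 0)" using step0[OF s1(1,2) o1(2) s1(3)] .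
        have B: "\<tau>'!0 = 0 \<or> (\<tau>'!0 = 1 \<and> ?k = 0)" using step0[OF s2(1,2) o2(2) s2(3)] .
        have "t!(\<tau>!0) = t!(\<tau>'!0)" using ev l by blast
        moreover have "t!0 \<noteq> t!1" if "?k = 0" using adj[of 0] tf(3) that by simp
        ultimately show "\<tau>!0 = \<tau>'!0" using A B by auto
      qed
    next
      case (Suc i)
      show ?case
      proof
        assume l: "Suc i < length \<tau>"
        hence IH: "\<tau>!i = \<tau>'!i" using Suc by simp
        have A: "\<tau>!Suc i = \<tau>!i \<or> \<tau>!Suc i = Suc (\<tau>!i) \<or> (\<tau>!Suc i = Suc (Suc (\<tau>!i)) \<and> ?k = Suc (\<tau>!i))"
          using step1[OF s1(1,2) o1(2) l] .
        have B: "\<tau>'!Suc i = \<tau>'!i \<or> \<tau>'!Suc i = Suc (\<tau>'!i) \<or> (\<tau>'!Suc i = Suc (Suc (\<tau>'!i)) \<and> ?k = Suc (\<tau>'!i))"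
          using step1[OF s2(1,2) o2(2)] l len by simp
        have E: "t!(\<tau>!Suc i) = t!(\<tau>'!Suc i)" using ev l by blast
        have L1: "\<tau>!Suc i < length t" "\<tau>'!Suc i < length t" using b1 b2 l by auto
        obtain a b b' where ab: "a = \<tau>!i" "b = \<tau>!Suc i" "b' = \<tau>'!Suc i" by blast
        have A': "b = a \<or> b = Suc a \<or> (b = Suc (Suc a) \<and> ?k = Suc a)" using A ab by simp
        have B': "b' = a \<or> b' = Suc a \<or> (b' = Suc (Suc a) \<and> ?k = Suc a)" using B ab IH by simp
        have E': "t!b = t!b'" using E ab by simp
        have L': "b < length t" "b' < length t" using L1 ab by auto
        have a1: "Suc a < length t \<Longrightarrow> t!a \<noteq> t!Suc a" by (rule adj)
        have a2: "Suc (Suc a) < length t \<Longrightarrow> t!Suc a \<noteq> t!Suc (Suc a)" by (rule adj)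
        have a3: "?k = Suc a \<Longrightarrow> t!a \<noteq> t!Suc (Suc a)" using skip by simp
        have "b = b'"
          using A' B' E' L' a1 a2 a3 by (auto; metis)
        thus "\<tau>!Suc i = \<tau>'!Suc i" using ab by simp
      qed
    qed
  qed
  show ?thesis using all len by (simp add: nth_equalityI)
qed

definition rank :: "nat \<Rightarrow> nat list \<Rightarrow> nat" where
  "rank N t = card {u \<in> Tops N. key N u < key N t}"

lemma Tops_thick: "t \<in> Tops N \<Longrightarrow> t \<in> thick N" by (simp add: Tops_def XX_def)

lemma fin_below: "finite {u \<in> Tops N. key N u < key N t}"
proof (rule finite_subset)
  show "{u \<in> Tops N. key N u < key N t} \<subseteq> {xs. set xs \<subseteq> {0..N} \<and> length xs \<le> length t}"
    by (auto simp: key_def Tops_def XX_def thick_def)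
  show "finite {xs. set xs \<subseteq> {0..N} \<and> length xs \<le> length t}"
    by (rule finite_lists_length_le) simp
qed

lemma rank_mono:
  assumes "u \<in> Tops N" "key N u < key N t"
  shows "rank N u < rank N t"
  unfolding rank_def
proof (rule psubset_card_mono[OF fin_below])
  show "{w \<in> Tops N. key N w < key N u} \<subset> {w \<in> Tops N. key N w < key N t}"
    using assms by auto
qed

lemma key_inj: "key N u = key N t \<Longrightarrow> u = t" by (simp add: key_def)

lemma rank_inj: "u \<in> Tops N \<Longrightarrow> t \<in> Tops N \<Longrightarrow> rank N u = rank N t \<Longrightarrow> u = t"
  by (metis key_inj less_irrefl linorder_neqE rank_mono)

lemma rank_le_key: "u \<in> Tops N \<Longrightarrow> t \<in> Tops N \<Longrightarrow> rank N u \<le> rank N t \<Longrightarrow> key N u \<le> key N t"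
  by (meson leD le_less_linear rank_mono)

lemma rank_down:
  assumes t: "t \<in> Tops N" and r: "r < rank N t"
  shows "\<exists>u \<in> Tops N. rank N u = r"
proof -
  let ?A = "{u \<in> Tops N. key N u < key N t}"
  have fA: "finite ?A" by (rule fin_below)
  have inj: "inj_on (rank N) ?A" using rank_inj by (auto simp: inj_on_def)
  have sub: "rank N ` ?A \<subseteq> {..<card ?A}"
  proof
    fix y assume "y \<in> rank N ` ?A"
    then obtain u where u: "u \<in> ?A" "y = rank N u" by blast
    have "rank N u < rank N t" using rank_mono u by blast
    thus "y \<in> {..<card ?A}" using u unfolding rank_def[of N t] by simp
  qed
  have "card (rank N ` ?A) = card {..<card ?A}" using card_image[OF inj] by simp
  hence "rank N ` ?A = {..<card ?A}" using card_subset_eq[OF _ sub] by simp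
  moreover have "r \<in> {..<card ?A}" using r by (simp add: rank_def)
  ultimately have "r \<in> rank N ` ?A" by simp
  then obtain u where "u \<in> ?A" "rank N u = r" by blast
  thus ?thesis by blast
qed

definition FF :: "nat \<Rightarrow> nat \<Rightarrow> nat list set" where
  "FF N l = SS N \<union> {\<sigma> \<in> thick N. \<sigma> \<notin> SS N \<and> rank N (own (remdups_adj \<sigma>)) < l}"

lemma SS_thick: "SS N \<subseteq> thick N" by (auto simp: SS_iff)

lemma cover_props:
  assumes t: "t \<in> Tops N" and op: "simp_op \<tau> (length t - 1)"
    and cov: "\<forall>j\<le>length t - 1. j \<noteq> idx t \<longrightarrow> j \<in> set \<tau>"
  shows "act \<tau> t \<notin> SS N" "own (remdups_adj (act \<tau> t)) = t"
proof -
  have th: "act \<tau> t \<in> thick N" using act_thick[OF Tops_thick[OF t] op] .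
  have X: "remdups_adj (act \<tau> t) \<in> XX N"
    using cover_rd[OF t op cov] top_dface(1)[OF t] t by (auto simp: Tops_def)
  thus "act \<tau> t \<notin> SS N" using rd_SS[OF th] by (auto simp: XX_def)
  show "own (remdups_adj (act \<tau> t)) = t"
    using cover_rd[OF t op cov] own_top[OF t] own_dface[OF t] by auto
qed

lemma horn_iff: "\<tau> \<in> horn p i \<longleftrightarrow> simp_op \<tau> p \<and> (\<exists>j\<le>p. j \<noteq> i \<and> j \<notin> set \<tau>)"
  by (simp add: horn_def std_simp_op)

lemma img_in_Q:
  assumes t: "t \<in> Tops N" and op: "simp_op \<tau> (length t - 1)"
  shows "act \<tau> t \<in> FF N (Suc (rank N t))"
proof -
  have th: "act \<tau> t \<in> thick N" using act_thick[OF Tops_thick[OF t] op] .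
  show ?thesis
  proof (cases "act \<tau> t \<in> SS N")
    case True thus ?thesis by (simp add: FF_def)
  next
    case False
    show ?thesis
    proof (cases "\<forall>j\<le>length t - 1. j \<noteq> idx t \<longrightarrow> j \<in> set \<tau>")
      case True
      thus ?thesis using cover_props(2)[OF t op True] th False by (simp add: FF_def)
    next
      case c: False
      then obtain j where j: "j \<le> length t - 1" "j \<noteq> idx t" "j \<notin> set \<tau>" by blast
      have X: "remdups_adj (act \<tau> t) \<in> XX N" using horn_key(1)[OF t op j False] .
      have "rank N (own (remdups_adj (act \<tau> t))) < rank N t"
        using rank_mono[OF own_XX(1)[OF X] horn_key(2)[OF t op j False]] .
      thus ?thesis using th False by (simp add: FF_def)
    qed
  qed
qed

lemma step_lemma:
  assumes t: "t \<in> Tops N"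
  shows "pushout_step (FF N (rank N t)) (FF N (Suc (rank N t))) (length t - 1) (idx t) (\<lambda>\<tau>. act \<tau> t)"
proof -
  note tf = top_facts[OF t]
  let ?l = "rank N t" and ?p = "length t - 1" and ?k = "idx t"
  let ?P = "FF N ?l" and ?Q = "FF N (Suc ?l)" and ?x = "\<lambda>\<tau>. act \<tau> t"
  have tne: "t \<noteq> []" using tf(3) by auto
  have PQ: "?P \<subseteq> ?Q" by (auto simp: FF_def)
  have xQ: "?x ` std ?p \<subseteq> ?Q" using img_in_Q[OF t] by (auto simp: std_simp_op)
  have sm: "simp_map (std ?p) ?Q ?x"
    unfolding simp_map_def
  proof (intro ballI conjI allI impI)
    fix \<tau> assume "\<tau> \<in> std ?p"
    hence op: "simp_op \<tau> ?p" by (simp add: std_simp_op)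
    show "act \<tau> t \<in> ?Q" using img_in_Q[OF t op] .
    show "length (act \<tau> t) = length \<tau>" by simp
    fix \<theta> assume "simp_op \<theta> (length \<tau> - 1)"
    moreover have "\<tau> \<noteq> []" using op by (simp add: simp_op_def)
    ultimately show "act (act \<theta> \<tau>) t = act \<theta> (act \<tau> t)" by (simp add: act_comp)
  qed
  have hP: "?x ` horn ?p ?k \<subseteq> ?P"
  proof
    fix y assume "y \<in> ?x ` horn ?p ?k"
    then obtain \<tau> j where y: "y = act \<tau> t" and op: "simp_op \<tau> ?p" and j: "j \<le> ?p" "j \<noteq> ?k" "j \<notin> set \<tau>"
      by (auto simp: horn_iff)
    have th: "act \<tau> t \<in> thick N" using act_thick[OF Tops_thick[OF t] op] .
    show "y \<in> ?P"
    proof (cases "act \<tau> t \<in> SS N")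
      case True thus ?thesis using y by (simp add: FF_def)
    next
      case False
      have X: "remdups_adj (act \<tau> t) \<in> XX N" using horn_key(1)[OF t op j False] .
      have "rank N (own (remdups_adj (act \<tau> t))) < rank N t"
        using rank_mono[OF own_XX(1)[OF X] horn_key(2)[OF t op j False]] .
      thus ?thesis using th False y by (simp add: FF_def)
    qed
  qed
  have nh: "\<tau> \<in> std ?p - horn ?p ?k \<longleftrightarrow> simp_op \<tau> ?p \<and> (\<forall>j\<le>?p. j \<noteq> ?k \<longrightarrow> j \<in> set \<tau>)" for \<tau>
    by (auto simp: horn_iff std_simp_op)
  have inj: "inj_on ?x (std ?p - horn ?p ?k)"
    unfolding inj_on_def using inj_act[OF t] nh by blast
  have disj: "?x ` (std ?p - horn ?p ?k) \<inter> ?P = {}"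
  proof -
    have "act \<tau> t \<notin> ?P" if "\<tau> \<in> std ?p - horn ?p ?k" for \<tau>
      using cover_props[OF t] nh[of \<tau>] that by (auto simp: FF_def)
    thus ?thesis by blast
  qed
  have QP: "?Q \<subseteq> ?P \<union> ?x ` std ?p"
  proof
    fix \<sigma> assume sQ: "\<sigma> \<in> ?Q"
    show "\<sigma> \<in> ?P \<union> ?x ` std ?p"
    proof (cases "\<sigma> \<in> ?P")
      case True thus ?thesis by simp
    next
      case False
      have th: "\<sigma> \<in> thick N" and ns: "\<sigma> \<notin> SS N" and r: "rank N (own (remdups_adj \<sigma>)) = ?l"
        using sQ False by (auto simp: FF_def)
      have X: "remdups_adj \<sigma> \<in> XX N" using rd_XX[OF th ns] .
      have o: "own (remdups_adj \<sigma>) = t" using rank_inj[OF own_XX(1)[OF X] t r] .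
      have sne: "\<sigma> \<noteq> []" using th by (simp add: thick_def)
      obtain \<tau>0 where t0: "simp_op \<tau>0 (length (remdups_adj \<sigma>) - 1)" "act \<tau>0 (remdups_adj \<sigma>) = \<sigma>"
        using degen[OF sne] by blast
      have "\<exists>\<iota>. simp_op \<iota> ?p \<and> length \<iota> = length (remdups_adj \<sigma>) \<and> act \<iota> t = remdups_adj \<sigma>"
      proof (cases "remdups_adj \<sigma> = t")
        case True
        have "simp_op [0..<length t] ?p" using tne by (auto simp: simp_op_def)
        moreover have "act [0..<length t] t = t" by (simp add: act_def map_nth)
        ultimately have "simp_op [0..<length t] ?p \<and> length [0..<length t] = length (remdups_adj \<sigma>) \<and> act [0..<length t] t = remdups_adj \<sigma>"
          using True by simp
        thus ?thesis by blast
      next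
        case False
        hence b: "remdups_adj \<sigma> = dface ?k t" using own_eq[OF X t o] by blast
        let ?\<iota> = "filter (\<lambda>i. i \<noteq> ?k) [0..<length t]"
        have e: "act ?\<iota> t = dface ?k t" using dface_filter[of ?k t] tf(3) by (simp add: act_def)
        have "length ?\<iota> = length (dface ?k t)" using arg_cong[OF e, of length] by simp
        moreover have "?\<iota> \<noteq> []"
        proof -
          have "0 < length (dface ?k t)" using tf(3) by simp
          thus ?thesis using \<open>length ?\<iota> = length (dface ?k t)\<close> by auto
        qed
        moreover have "sorted ?\<iota>" using sorted_wrt_filter[OF sorted_upt] by blast
        moreover have "\<forall>j\<in>set ?\<iota>. j \<le> ?p" by auto
        ultimately have "simp_op ?\<iota> ?p \<and> length ?\<iota> = length (remdups_adj \<sigma>) \<and> act ?\<iota> t = remdups_adj \<sigma>"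
          using e b by (simp add: simp_op_def)
        thus ?thesis by blast
      qed
      then obtain \<iota> where i: "simp_op \<iota> ?p" "length \<iota> = length (remdups_adj \<sigma>)" "act \<iota> t = remdups_adj \<sigma>"
        by blast
      have ine: "\<iota> \<noteq> []" using i(1) by (simp add: simp_op_def)
      have op0: "simp_op \<tau>0 (length \<iota> - 1)" using t0(1) i(2) by simp
      have "\<sigma> = act (act \<tau>0 \<iota>) t" using act_comp[OF op0 ine, of t] t0(2) i(3) by simp
      moreover have "act \<tau>0 \<iota> \<in> std ?p" using simp_op_comp[OF i(1) op0] by (simp add: std_simp_op)
      ultimately show ?thesis by blast
    qed
  qed
  have Qeq: "?Q = ?P \<union> ?x ` std ?p" using QP PQ xQ by blast
  show ?thesis unfolding pushout_step_def using sm hP PQ Qeq inj disj by blast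
qed

theorem lemma7p4:
  fixes n :: nat
  shows "expansion (thick_bd n \<union> std n) (thick n)"
proof -
  have S: "thick_bd n \<union> std n = SS n" by (simp add: SS_def)
  define K where "K = rank n ` Tops n"
  define e where "e l = inv_into (Tops n) (rank n) l" for l
  have eK: "e l \<in> Tops n" "rank n (e l) = l" if "l \<in> K" for l
    using that unfolding K_def e_def by (auto intro: inv_into_into f_inv_into_f)
  have c1: "FF n 0 = SS n" by (auto simp: FF_def SS_thick[THEN subsetD])
  have c2: "\<forall>l\<in>K. \<forall>l'<l. l' \<in> K"
  proof (intro ballI allI impI)
    fix l l' assume "l \<in> K" "l' < l"
    thus "l' \<in> K" using rank_down[OF eK(1), of l l'] eK(2)[of l] unfolding K_def by auto
  qed
  have c3: "\<forall>l\<in>K. 1 \<le> length (e l) - 1 \<and> idx (e l) \<le> length (e l) - 1 \<and>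
      pushout_step (FF n l) (FF n (Suc l)) (length (e l) - 1) (idx (e l)) (\<lambda>\<tau>. act \<tau> (e l))"
  proof
    fix l assume l: "l \<in> K"
    have "Suc (idx (e l)) < length (e l)" using top_facts(3)[OF eK(1)[OF l]] .
    moreover have "pushout_step (FF n l) (FF n (Suc l)) (length (e l) - 1) (idx (e l)) (\<lambda>\<tau>. act \<tau> (e l))"
      using step_lemma[OF eK(1)[OF l]] eK(2)[OF l] by simp
    ultimately show "1 \<le> length (e l) - 1 \<and> idx (e l) \<le> length (e l) - 1 \<and>
      pushout_step (FF n l) (FF n (Suc l)) (length (e l) - 1) (idx (e l)) (\<lambda>\<tau>. act \<tau> (e l))"
      by arith
  qed
  have c4: "\<forall>l. l \<notin> K \<longrightarrow> FF n (Suc l) = FF n l"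
  proof (intro allI impI)
    fix l assume l: "l \<notin> K"
    have "rank n (own (remdups_adj \<sigma>)) \<noteq> l" if "\<sigma> \<in> thick n" "\<sigma> \<notin> SS n" for \<sigma>
    proof
      assume "rank n (own (remdups_adj \<sigma>)) = l"
      moreover have "own (remdups_adj \<sigma>) \<in> Tops n" using own_XX(1)[OF rd_XX[OF that]] .
      ultimately have "l \<in> rank n ` Tops n" by (metis image_eqI)
      thus False using l unfolding K_def by simp
    qed
    hence "rank n (own (remdups_adj \<sigma>)) < Suc l \<longleftrightarrow> rank n (own (remdups_adj \<sigma>)) < l"
      if "\<sigma> \<in> thick n" "\<sigma> \<notin> SS n" for \<sigma> using that by (simp add: less_Suc_eq)
    thus "FF n (Suc l) = FF n l" unfolding FF_def by auto
  qed
  have c5: "\<forall>l l'. l \<le> l' \<longrightarrow> l' \<in> K \<longrightarrow> length (e l) - 1 \<le> length (e l') - 1"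
  proof (intro allI impI)
    fix l l' assume ll: "l \<le> l'" "l' \<in> K"
    have lK: "l \<in> K" using c2 ll by (cases "l = l'") auto
    have "rank n (e l) \<le> rank n (e l')" using eK(2)[OF lK] eK(2)[OF ll(2)] ll(1) by simp
    hence "key n (e l) \<le> key n (e l')"
      using rank_le_key[OF eK(1)[OF lK] eK(1)[OF ll(2)]] by blast
    hence "length (e l) \<le> length (e l')" by (auto simp: key_def)
    thus "length (e l) - 1 \<le> length (e l') - 1" by simp
  qed
  have c6: "thick n = (\<Union>l. FF n l)"
  proof
    show "(\<Union>l. FF n l) \<subseteq> thick n" using SS_thick by (auto simp: FF_def)
    show "thick n \<subseteq> (\<Union>l. FF n l)"
    proof
      fix \<sigma> assume s: "\<sigma> \<in> thick n"
      show "\<sigma> \<in> (\<Union>l. FF n l)"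
      proof (cases "\<sigma> \<in> SS n")
        case True thus ?thesis by (auto simp: FF_def)
      next
        case False
        hence "\<sigma> \<in> FF n (Suc (rank n (own (remdups_adj \<sigma>))))" using s by (simp add: FF_def)
        thus ?thesis by blast
      qed
    qed
  qed
  have ex: "\<exists>F K nn i x.
       F 0 = thick_bd n \<union> std n \<and>
       (\<forall>l\<in>K. \<forall>l'<l. l' \<in> K) \<and>
       (\<forall>l\<in>K. 1 \<le> nn l \<and> i l \<le> nn l \<and> pushout_step (F l) (F (Suc l)) (nn l) (i l) (x l)) \<and>
       (\<forall>l. l \<notin> K \<longrightarrow> F (Suc l) = F l) \<and>
       (\<forall>l l'. l \<le> l' \<longrightarrow> l' \<in> K \<longrightarrow> nn l \<le> nn l') \<and>
       thick n = (\<Union>l. F l)"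
    apply (rule exI[where x="FF n"])
    apply (rule exI[where x=K])
    apply (rule exI[where x="\<lambda>l. length (e l) - 1"])
    apply (rule exI[where x="\<lambda>l. idx (e l)"])
    apply (rule exI[where x="\<lambda>l \<tau>. act \<tau> (e l)"])
    apply (intro conjI)
    using c1 S apply simp
    apply (rule c2)
    apply (rule c3)
    apply (rule c4)
    apply (rule c5)
    by (rule c6)
  have sub: "thick_bd n \<union> std n \<subseteq> thick n" using SS_thick S by simp
  show ?thesis unfolding expansion_def
    apply (intro conjI)
    apply (rule simp_subset_S)
    apply (rule simp_subset_thick)
    apply (rule sub)
    by (rule ex)
qed

end
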